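(* Let $T$ be an attack-defence tree and $\llbracket T\rrbracket$ its encoding in the rewrite theory $\mathcal{R}_{ADT}$ described in the context. If $n$ agents can perform an attack on $T$ with time $t$, then there exist $a$, $SA$ and $SD$ such that $\mathcal{R}_{ADT} \vdash \llbracket T\rrbracket \to^{*} [a,t,SA,SD]$ and $n \le a$.
   Context: An attack-defence tree (ADTree) $T$ is a tree whose leaves are attack actions (each with a time and a cost) or defence actions, and whose inner nodes are gates: OR (unordered children, succeeds iff some child succeeds), AND (unordered children in parallel, succeeds iff all succeed), SAND (ordered children executed sequentially), and NOT (single child, succeeds iff the child fails; encodes counter-defence gates). Gates may carry their own time and cost. Agents are interchangeable workers, each executing at most one action at a time; an attack on $T$ with time $t$ performed by $n$ agents is a schedule of the required actions among $n$ agents achieving the root within total time $t$. Rewrite theory $\mathcal{R}_{ADT}$: each node is an object with attributes time, cost, agents (1 for attack leaves, 0 for gates), accumulated time acctime and cost (initially 0), a set used, its children, and a status in $\{\mathrm{Unknown},\mathrm{Succeed},\mathrm{Fail}\}$ initially Unknown; $\llbracket T\rrbracket=\{Q;Cnf\}$ with $Q$ the root and $Cnf$ the multiset of node objects. Rules: Unknown attack/defence leaves may become Succeed or Fail. OR: a Succeed pending child $o$ makes the Unknown gate Succeed, empties its pending children, records $o$ in used, sets acctime/cost to the gate's own plus $o$'s accumulated values and agents to $o$'s; Fail children are removed; no pending children makes it Fail. AND: Succeed children are removed from pending and recorded, acctime combined by max and agents by sum; a Fail child makes it Fail; no pending children makes it Succeed. SAND: a Succeed first child is removed and recorded, acctime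 combined by sum and agents by max; failing first child gives Fail; empty list gives Succeed. NOT: child Succeed gives Fail, child Fail gives Succeed. END: when the root is Succeed, $\{Q;Cnf\}$ rewrites to the summary term $[a,t,SA,SD]$ of the root's agents $a$, accumulated time $t$, the set $SA$ of used attacks and the set $SD$ of active defences. $\mathcal{R}\vdash u\to^{*}u'$ means $u$ rewrites to $u'$ in zero or more steps. *)

theory Defs
  imports Main
begin

text \<open>Attack leaves carry a time and a cost; defence leaves carry nothing;
  gates (OR, AND, SAND, NOT) carry their own time and cost (first two nat
  arguments: time, cost).\<close>

datatype adt =
    ALeaf nat nat
  | DLeaf
  | OrG nat nat "adt list"
  | AndG nat nat "adt list"
  | SandG nat nat "adt list"
  | NotG nat nat adt

text \<open>Nodes are identified by their position (path from the root); the
  i-th child of the node at position p has position p @ [i].\<close>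

type_synonym pos = "nat list"

text \<open>out p says whether the leaf at position p is performed (attack) /
  active (defence).  sat / unsat: the subtree located at position p
  succeeds / fails.\<close>

inductive sat :: "adt \<Rightarrow> (pos \<Rightarrow> bool) \<Rightarrow> pos \<Rightarrow> bool"
  and unsat :: "adt \<Rightarrow> (pos \<Rightarrow> bool) \<Rightarrow> pos \<Rightarrow> bool"
  where
  sA: "out p \<Longrightarrow> sat (ALeaf tm c) out p"
| uA: "\<not> out p \<Longrightarrow> unsat (ALeaf tm c) out p"
| sD: "out p \<Longrightarrow> sat DLeaf out p"
| uD: "\<not> out p \<Longrightarrow> unsat DLeaf out p"
| sOr: "i < length cs \<Longrightarrow> sat (cs ! i) out (p @ [i]) \<Longrightarrow> sat (OrG g c cs) out p"
| uOr: "\<forall>i < length cs. unsat (cs ! i) out (p @ [i]) \<Longrightarrow> unsat (OrG g c cs) out p"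
| sAnd: "\<forall>i < length cs. sat (cs ! i) out (p @ [i]) \<Longrightarrow> sat (AndG g c cs) out p"
| uAnd: "i < length cs \<Longrightarrow> unsat (cs ! i) out (p @ [i]) \<Longrightarrow> unsat (AndG g c cs) out p"
| sSand: "\<forall>i < length cs. sat (cs ! i) out (p @ [i]) \<Longrightarrow> sat (SandG g c cs) out p"
| uSand: "i < length cs \<Longrightarrow> unsat (cs ! i) out (p @ [i]) \<Longrightarrow> unsat (SandG g c cs) out p"
| sNot: "unsat t out (p @ [0]) \<Longrightarrow> sat (NotG g c t) out p"
| uNot: "sat t out (p @ [0]) \<Longrightarrow> unsat (NotG g c t) out p"

text \<open>exec T out p s J f: under leaf outcome out, the subtree T located at
  position p is achieved when started at time s, by executing the set J of
  required attack actions, each recorded as (position, start time, finish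
  time), and it is achieved at time f.\<close>

inductive exec :: "adt \<Rightarrow> (pos \<Rightarrow> bool) \<Rightarrow> pos \<Rightarrow> nat \<Rightarrow> (pos \<times> nat \<times> nat) set \<Rightarrow> nat \<Rightarrow> bool"
  where
  eA: "out p \<Longrightarrow> exec (ALeaf tm c) out p s {(p, s, s + tm)} (s + tm)"
| eD: "out p \<Longrightarrow> exec DLeaf out p s {} s"
| eOr: "i < length cs \<Longrightarrow> exec (cs ! i) out (p @ [i]) s J f
        \<Longrightarrow> exec (OrG g c cs) out p s J (f + g)"
| eAnd: "\<forall>i < length cs. exec (cs ! i) out (p @ [i]) s (JJ i) (ff i)
        \<Longrightarrow> exec (AndG g c cs) out p s (\<Union>i < length cs. JJ i)
              (Max (insert s (ff ` {..<length cs})) + g)"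
| eSand: "st 0 = s \<Longrightarrow>
        \<forall>i < length cs. exec (cs ! i) out (p @ [i]) (st i) (JJ i) (st (Suc i))
        \<Longrightarrow> exec (SandG g c cs) out p s (\<Union>i < length cs. JJ i) (st (length cs) + g)"
| eNot: "unsat t out (p @ [0]) \<Longrightarrow> exec (NotG g c t) out p s {} (s + g)"

definition fits :: "(pos \<times> nat \<times> nat) set \<Rightarrow> nat \<Rightarrow> bool" where
  "fits J n \<longleftrightarrow> (\<exists>ag :: pos \<times> nat \<times> nat \<Rightarrow> nat.
      (\<forall>j \<in> J. ag j < n) \<and>
      (\<forall>j1 \<in> J. \<forall>j2 \<in> J. j1 \<noteq> j2 \<and> ag j1 = ag j2 \<longrightarrow>
          snd (snd j1) \<le> fst (snd j2) \<or> snd (snd j2) \<le> fst (snd j1)))"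

text \<open>n agents can perform an attack on T with time t: some attack on T
  (leaf outcome and schedule of its required actions, starting at time 0)
  achieves the root at time t, and n is the number of agents it needs
  (its actions fit on n agents but not on fewer).\<close>

definition can_perform :: "adt \<Rightarrow> nat \<Rightarrow> nat \<Rightarrow> bool" where
  "can_perform T n t \<longleftrightarrow> (\<exists>out J. exec T out [] 0 J t \<and> fits J n \<and> (\<forall>m < n. \<not> fits J m))"

datatype kind = KAtk | KDef | KOr | KAnd | KSand | KNot

datatype status = Unknown | Succeed | Fail

record obj =
  kind :: kind
  otime :: nat
  ocost :: nat
  agents :: nat
  acctime :: nat
  acccost :: nat
  used :: "pos set"
  pend :: "pos list"
  status :: status

text \<open>Terms: a configuration {Q; Cnf} (root identifier and the node objects,
  given as a finite map from identifiers to objects), or a summary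
  [a, t, SA, SD].\<close>

datatype rterm =
    Conf pos "pos \<Rightarrow> obj option"
  | Summary nat nat "pos set" "pos set"

fun node_at :: "adt \<Rightarrow> pos \<Rightarrow> adt option" where
  "node_at T [] = Some T"
| "node_at (OrG g c cs) (i # q) = (if i < length cs then node_at (cs ! i) q else None)"
| "node_at (AndG g c cs) (i # q) = (if i < length cs then node_at (cs ! i) q else None)"
| "node_at (SandG g c cs) (i # q) = (if i < length cs then node_at (cs ! i) q else None)"
| "node_at (NotG g c t) (i # q) = (if i = 0 then node_at t q else None)"
| "node_at _ (i # q) = None"

fun init_obj :: "pos \<Rightarrow> adt \<Rightarrow> obj" where
  "init_obj p (ALeaf tm c) = \<lparr>kind = KAtk, otime = tm, ocost = c, agents = 1, acctime = 0,
      acccost = 0, used = {}, pend = [], status = Unknown\<rparr>"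
| "init_obj p DLeaf = \<lparr>kind = KDef, otime = 0, ocost = 0, agents = 0, acctime = 0,
      acccost = 0, used = {}, pend = [], status = Unknown\<rparr>"
| "init_obj p (OrG g c cs) = \<lparr>kind = KOr, otime = g, ocost = c, agents = 0, acctime = 0,
      acccost = 0, used = {}, pend = map (\<lambda>i. p @ [i]) [0..<length cs], status = Unknown\<rparr>"
| "init_obj p (AndG g c cs) = \<lparr>kind = KAnd, otime = g, ocost = c, agents = 0, acctime = 0,
      acccost = 0, used = {}, pend = map (\<lambda>i. p @ [i]) [0..<length cs], status = Unknown\<rparr>"
| "init_obj p (SandG g c cs) = \<lparr>kind = KSand, otime = g, ocost = c, agents = 0, acctime = 0,
      acccost = 0, used = {}, pend = map (\<lambda>i. p @ [i]) [0..<length cs], status = Unknown\<rparr>"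
| "init_obj p (NotG g c t) = \<lparr>kind = KNot, otime = g, ocost = c, agents = 0, acctime = 0,
      acccost = 0, used = {}, pend = [p @ [0]], status = Unknown\<rparr>"

definition encode :: "adt \<Rightarrow> rterm" where
  "encode T = Conf [] (\<lambda>p. map_option (init_obj p) (node_at T p))"

definition used_attacks :: "pos \<Rightarrow> (pos \<Rightarrow> obj option) \<Rightarrow> pos set" where
  "used_attacks r M = {q. (r, q) \<in> {(x, y). \<exists>ob. M x = Some ob \<and> y \<in> used ob}\<^sup>*
                          \<and> (\<exists>ob. M q = Some ob \<and> kind ob = KAtk)}"

definition active_defences :: "(pos \<Rightarrow> obj option) \<Rightarrow> pos set" where
  "active_defences M = {q. \<exists>ob. M q = Some ob \<and> kind ob = KDef \<and> status ob = Succeed}"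

inductive step :: "rterm \<Rightarrow> rterm \<Rightarrow> bool" where
  leaf_succ: "M p = Some ob \<Longrightarrow> kind ob \<in> {KAtk, KDef} \<Longrightarrow> status ob = Unknown \<Longrightarrow>
     step (Conf r M) (Conf r (M(p \<mapsto> ob\<lparr>status := Succeed, acctime := otime ob, acccost := ocost ob\<rparr>)))"
| leaf_fail: "M p = Some ob \<Longrightarrow> kind ob \<in> {KAtk, KDef} \<Longrightarrow> status ob = Unknown \<Longrightarrow>
     step (Conf r M) (Conf r (M(p \<mapsto> ob\<lparr>status := Fail\<rparr>)))"
| or_succ: "M p = Some ob \<Longrightarrow> kind ob = KOr \<Longrightarrow> status ob = Unknown \<Longrightarrow> c \<in> set (pend ob) \<Longrightarrow>
     M c = Some oc \<Longrightarrow> status oc = Succeed \<Longrightarrow>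
     step (Conf r M) (Conf r (M(p \<mapsto> ob\<lparr>status := Succeed, pend := [], used := used ob \<union> {c},
        acctime := otime ob + acctime oc, acccost := ocost ob + acccost oc, agents := agents oc\<rparr>)))"
| or_rem: "M p = Some ob \<Longrightarrow> kind ob = KOr \<Longrightarrow> status ob = Unknown \<Longrightarrow> c \<in> set (pend ob) \<Longrightarrow>
     M c = Some oc \<Longrightarrow> status oc = Fail \<Longrightarrow>
     step (Conf r M) (Conf r (M(p \<mapsto> ob\<lparr>pend := removeAll c (pend ob)\<rparr>)))"
| or_fail: "M p = Some ob \<Longrightarrow> kind ob = KOr \<Longrightarrow> status ob = Unknown \<Longrightarrow> pend ob = [] \<Longrightarrow>
     step (Conf r M) (Conf r (M(p \<mapsto> ob\<lparr>status := Fail\<rparr>)))"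
| and_child: "M p = Some ob \<Longrightarrow> kind ob = KAnd \<Longrightarrow> status ob = Unknown \<Longrightarrow> c \<in> set (pend ob) \<Longrightarrow>
     M c = Some oc \<Longrightarrow> status oc = Succeed \<Longrightarrow>
     step (Conf r M) (Conf r (M(p \<mapsto> ob\<lparr>pend := removeAll c (pend ob), used := used ob \<union> {c},
        acctime := max (acctime ob) (acctime oc), acccost := acccost ob + acccost oc,
        agents := agents ob + agents oc\<rparr>)))"
| and_fail: "M p = Some ob \<Longrightarrow> kind ob = KAnd \<Longrightarrow> status ob = Unknown \<Longrightarrow> c \<in> set (pend ob) \<Longrightarrow>
     M c = Some oc \<Longrightarrow> status oc = Fail \<Longrightarrow>
     step (Conf r M) (Conf r (M(p \<mapsto> ob\<lparr>status := Fail\<rparr>)))"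
| and_succ: "M p = Some ob \<Longrightarrow> kind ob = KAnd \<Longrightarrow> status ob = Unknown \<Longrightarrow> pend ob = [] \<Longrightarrow>
     step (Conf r M) (Conf r (M(p \<mapsto> ob\<lparr>status := Succeed,
        acctime := acctime ob + otime ob, acccost := acccost ob + ocost ob\<rparr>)))"
| sand_child: "M p = Some ob \<Longrightarrow> kind ob = KSand \<Longrightarrow> status ob = Unknown \<Longrightarrow> pend ob = c # cs \<Longrightarrow>
     M c = Some oc \<Longrightarrow> status oc = Succeed \<Longrightarrow>
     step (Conf r M) (Conf r (M(p \<mapsto> ob\<lparr>pend := cs, used := used ob \<union> {c},
        acctime := acctime ob + acctime oc, acccost := acccost ob + acccost oc,
        agents := max (agents ob) (agents oc)\<rparr>)))"
| sand_fail: "M p = Some ob \<Longrightarrow> kind ob = KSand \<Longrightarrow> status ob = Unknown \<Longrightarrow> pend ob = c # cs \<Longrightarrow>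
     M c = Some oc \<Longrightarrow> status oc = Fail \<Longrightarrow>
     step (Conf r M) (Conf r (M(p \<mapsto> ob\<lparr>status := Fail\<rparr>)))"
| sand_succ: "M p = Some ob \<Longrightarrow> kind ob = KSand \<Longrightarrow> status ob = Unknown \<Longrightarrow> pend ob = [] \<Longrightarrow>
     step (Conf r M) (Conf r (M(p \<mapsto> ob\<lparr>status := Succeed,
        acctime := acctime ob + otime ob, acccost := acccost ob + ocost ob\<rparr>)))"
| not_fail: "M p = Some ob \<Longrightarrow> kind ob = KNot \<Longrightarrow> status ob = Unknown \<Longrightarrow> pend ob = [c] \<Longrightarrow>
     M c = Some oc \<Longrightarrow> status oc = Succeed \<Longrightarrow>
     step (Conf r M) (Conf r (M(p \<mapsto> ob\<lparr>status := Fail\<rparr>)))"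
| not_succ: "M p = Some ob \<Longrightarrow> kind ob = KNot \<Longrightarrow> status ob = Unknown \<Longrightarrow> pend ob = [c] \<Longrightarrow>
     M c = Some oc \<Longrightarrow> status oc = Fail \<Longrightarrow>
     step (Conf r M) (Conf r (M(p \<mapsto> ob\<lparr>status := Succeed,
        acctime := otime ob, acccost := ocost ob\<rparr>)))"
| finish: "M r = Some ob \<Longrightarrow> status ob = Succeed \<Longrightarrow>
     step (Conf r M) (Summary (agents ob) (acctime ob) (used_attacks r M) (active_defences M))"

abbreviation rewrites_to :: "rterm \<Rightarrow> rterm \<Rightarrow> bool" (infix "\<rightarrow>\<^sup>*" 50) where
  "u \<rightarrow>\<^sup>* u' \<equiv> step\<^sup>*\<^sup>* u u'"

end

theory Submission
  imports Defs
begin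

definition pre :: "pos \<Rightarrow> pos \<Rightarrow> bool" where
  "pre p x \<longleftrightarrow> (\<exists>q. x = p @ q)"

definition fresh :: "adt \<Rightarrow> pos \<Rightarrow> (pos \<Rightarrow> obj option) \<Rightarrow> bool" where
  "fresh T p M \<longleftrightarrow> (\<forall>q. M (p @ q) = map_option (init_obj (p @ q)) (node_at T q))"

lemma pre_child: "pre (p @ [i]) x \<Longrightarrow> pre p x"
  by (auto simp: pre_def)

lemma not_pre_self: "\<not> pre (p @ [i]) p"
  by (auto simp: pre_def)

lemma not_pre_other: "i \<noteq> k \<Longrightarrow> \<not> pre (p @ [i]) (p @ k # q)"
  by (auto simp: pre_def)

lemma fresh_root: "fresh T p M \<Longrightarrow> M p = Some (init_obj p T)"
  unfolding fresh_def by (metis append_Nil2 node_at.simps(1) option.simps(9))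

lemma fresh_Or: "fresh (OrG g c cs) p M \<Longrightarrow> i < length cs \<Longrightarrow> fresh (cs ! i) (p @ [i]) M"
  unfolding fresh_def by (metis append_Cons append_assoc append_Nil node_at.simps(2))
lemma fresh_And: "fresh (AndG g c cs) p M \<Longrightarrow> i < length cs \<Longrightarrow> fresh (cs ! i) (p @ [i]) M"
  unfolding fresh_def by (metis append_Cons append_assoc append_Nil node_at.simps(3))
lemma fresh_Sand: "fresh (SandG g c cs) p M \<Longrightarrow> i < length cs \<Longrightarrow> fresh (cs ! i) (p @ [i]) M"
  unfolding fresh_def by (metis append_Cons append_assoc append_Nil node_at.simps(4))
lemma fresh_Not: "fresh (NotG g c t) p M \<Longrightarrow> fresh t (p @ [0]) M"
  unfolding fresh_def by (metis append_Cons append_assoc append_Nil node_at.simps(5))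

lemma fresh_keep: "fresh T (p @ [k]) M \<Longrightarrow> (\<forall>x. \<not> pre (p @ [i]) x \<longrightarrow> M' x = M x) \<Longrightarrow> i \<noteq> k
  \<Longrightarrow> fresh T (p @ [k]) M'"
  unfolding fresh_def using not_pre_other by (metis append_Cons append_assoc append_Nil)

lemma children_loop:
  assumes "\<forall>i<n. \<forall>M. fresh (cs!i) (p@[i]) M \<longrightarrow> (\<exists>M' ob. step\<^sup>*\<^sup>* (Conf r M) (Conf r M') \<and>
      (\<forall>x. \<not> pre (p@[i]) x \<longrightarrow> M' x = M x) \<and> M' (p@[i]) = Some ob \<and> Q i ob)"
  and "\<forall>i<n. fresh (cs!i) (p@[i]) M"
  shows "\<exists>M'. step\<^sup>*\<^sup>* (Conf r M) (Conf r M') \<and> (\<forall>x. (\<forall>i<n. \<not> pre (p@[i]) x) \<longrightarrow> M' x = M x)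
     \<and> (\<forall>i<n. \<exists>ob. M' (p@[i]) = Some ob \<and> Q i ob)"
  using assms
proof (induction n arbitrary: M)
  case 0
  then show ?case by auto
next
  case (Suc n)
  from Suc.prems have a1: "\<forall>i<n. \<forall>M. fresh (cs!i) (p@[i]) M \<longrightarrow> (\<exists>M' ob. step\<^sup>*\<^sup>* (Conf r M) (Conf r M') \<and>
      (\<forall>x. \<not> pre (p@[i]) x \<longrightarrow> M' x = M x) \<and> M' (p@[i]) = Some ob \<and> Q i ob)"
    and a2: "\<forall>i<n. fresh (cs!i) (p@[i]) M" by auto
  from Suc.IH[OF a1 a2] obtain M1 where m1: "step\<^sup>*\<^sup>* (Conf r M) (Conf r M1)"
    "\<forall>x. (\<forall>i<n. \<not> pre (p@[i]) x) \<longrightarrow> M1 x = M x" "\<forall>i<n. \<exists>ob. M1 (p@[i]) = Some ob \<and> Q i ob"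
    by blast
  have f0: "fresh (cs!n) (p@[n]) M"
    using Suc.prems by auto
  have fr: "fresh (cs!n) (p@[n]) M1"
    unfolding fresh_def
  proof
    fix q
    have "\<forall>i<n. \<not> pre (p@[i]) ((p@[n])@q)" using not_pre_other by auto
    then have "M1 ((p@[n])@q) = M ((p@[n])@q)" using m1(2) by blast
    then show "M1 ((p @ [n]) @ q) = map_option (init_obj ((p @ [n]) @ q)) (node_at (cs ! n) q)"
      using f0 unfolding fresh_def by simp
  qed
  obtain M2 ob where m2: "step\<^sup>*\<^sup>* (Conf r M1) (Conf r M2)"
      "\<forall>x. \<not> pre (p@[n]) x \<longrightarrow> M2 x = M1 x" "M2 (p@[n]) = Some ob" "Q n ob"
    using Suc.prems(1) fr by blast
  show ?case
  proof (intro exI[of _ M2] conjI allI impI)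
    show "step\<^sup>*\<^sup>* (Conf r M) (Conf r M2)" using m1(1) m2(1) by simp
    fix x assume "\<forall>i<Suc n. \<not> pre (p @ [i]) x"
    then show "M2 x = M x" using m1(2) m2(2) by simp
  next
    fix i assume i: "i < Suc n"
    show "\<exists>ob. M2 (p @ [i]) = Some ob \<and> Q i ob"
    proof (cases "i = n")
      case True then show ?thesis using m2 by auto
    next
      case False
      then have "\<not> pre (p@[n]) (p@[i])" using not_pre_other[of n i p "[]"] by simp
      then show ?thesis using m2(2) m1(3) i False by simp
    qed
  qed
qed

lemma or_loop:
  "M p = Some ob \<Longrightarrow> kind ob = KOr \<Longrightarrow> status ob = Unknown \<Longrightarrow> pend ob = ps @ rest \<Longrightarrow>
   distinct (ps @ rest) \<Longrightarrow> p \<notin> set ps \<Longrightarrow> \<forall>c\<in>set ps. \<exists>oc. M c = Some oc \<and> status oc = Fail \<Longrightarrow>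
   \<exists>ob'. step\<^sup>*\<^sup>* (Conf r M) (Conf r (M(p \<mapsto> ob'))) \<and> kind ob' = KOr \<and> status ob' = Unknown \<and> pend ob' = rest"
proof (induction ps arbitrary: M ob)
  case Nil
  then show ?case by (intro exI[of _ ob]) (auto simp: fun_upd_idem)
next
  case (Cons c cs)
  obtain oc where oc: "M c = Some oc" "status oc = Fail" using Cons.prems by auto
  define ob1 where "ob1 = ob\<lparr>pend := removeAll c (pend ob)\<rparr>"
  have s1: "step (Conf r M) (Conf r (M(p \<mapsto> ob1)))"
    unfolding ob1_def using Cons.prems oc by (intro or_rem) auto
  have pe: "pend ob1 = cs @ rest" using Cons.prems by (auto simp: ob1_def)
  have h1: "(M(p \<mapsto> ob1)) p = Some ob1" by simp
  have h2: "kind ob1 = KOr" "status ob1 = Unknown" using Cons.prems by (auto simp: ob1_def)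
  have h5: "distinct (cs @ rest)" "p \<notin> set cs" using Cons.prems by auto
  have h6: "\<forall>c\<in>set cs. \<exists>oc. (M(p \<mapsto> ob1)) c = Some oc \<and> status oc = Fail" using Cons.prems by auto
  obtain ob' where o: "step\<^sup>*\<^sup>* (Conf r (M(p \<mapsto> ob1))) (Conf r ((M(p \<mapsto> ob1))(p \<mapsto> ob')))"
     "kind ob' = KOr" "status ob' = Unknown" "pend ob' = rest"
    using Cons.IH[OF h1 h2 pe h5 h6] by blast
  have "step\<^sup>*\<^sup>* (Conf r M) (Conf r (M(p \<mapsto> ob')))" using converse_rtranclp_into_rtranclp[OF s1 o(1)] by simp
  then show ?case using o by blast
qed

lemma Max_insert_max: "finite (S::nat set) \<Longrightarrow> Max (insert (max a x) S) = Max (insert a (insert x S))"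
  by (cases "S = {}") (auto simp: Max_insert max.assoc)

lemma and_loop:
  "M p = Some ob \<Longrightarrow> kind ob = KAnd \<Longrightarrow> status ob = Unknown \<Longrightarrow> pend ob = ps @ rest \<Longrightarrow>
   distinct (ps @ rest) \<Longrightarrow> p \<notin> set ps \<Longrightarrow> \<forall>c\<in>set ps. \<exists>oc. M c = Some oc \<and> status oc = Succeed \<Longrightarrow>
   \<exists>ob'. step\<^sup>*\<^sup>* (Conf r M) (Conf r (M(p \<mapsto> ob'))) \<and> kind ob' = KAnd \<and> status ob' = Unknown \<and> pend ob' = rest
     \<and> acctime ob' = Max (insert (acctime ob) ((\<lambda>c. acctime (the (M c))) ` set ps))
     \<and> agents ob' = agents ob + sum_list (map (\<lambda>c. agents (the (M c))) ps) \<and> otime ob' = otime ob"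
proof (induction ps arbitrary: M ob)
  case Nil
  then show ?case by (intro exI[of _ ob]) (auto simp: fun_upd_idem)
next
  case (Cons c cs)
  obtain oc where oc: "M c = Some oc" "status oc = Succeed" using Cons.prems by auto
  define ob1 where "ob1 = ob\<lparr>pend := removeAll c (pend ob), used := used ob \<union> {c},
        acctime := max (acctime ob) (acctime oc), acccost := acccost ob + acccost oc,
        agents := agents ob + agents oc\<rparr>"
  have s1: "step (Conf r M) (Conf r (M(p \<mapsto> ob1)))"
    unfolding ob1_def using Cons.prems oc by (intro and_child) auto
  have pe: "pend ob1 = cs @ rest" using Cons.prems by (auto simp: ob1_def)
  have h1: "(M(p \<mapsto> ob1)) p = Some ob1" by simp
  have h2: "kind ob1 = KAnd" "status ob1 = Unknown" using Cons.prems by (auto simp: ob1_def)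
  have h5: "distinct (cs @ rest)" "p \<notin> set cs" using Cons.prems by auto
  have eq: "\<forall>c'\<in>set cs. (M(p \<mapsto> ob1)) c' = M c'" using Cons.prems by auto
  have h6: "\<forall>c\<in>set cs. \<exists>oc. (M(p \<mapsto> ob1)) c = Some oc \<and> status oc = Succeed" using Cons.prems by auto
  obtain ob' where o: "step\<^sup>*\<^sup>* (Conf r (M(p \<mapsto> ob1))) (Conf r ((M(p \<mapsto> ob1))(p \<mapsto> ob')))" "kind ob' = KAnd" "status ob' = Unknown" "pend ob' = rest"
     "acctime ob' = Max (insert (acctime ob1) ((\<lambda>c. acctime (the ((M(p \<mapsto> ob1)) c))) ` set cs))"
     "agents ob' = agents ob1 + sum_list (map (\<lambda>c. agents (the ((M(p \<mapsto> ob1)) c))) cs)" "otime ob' = otime ob1"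
    using Cons.IH[OF h1 h2 pe h5 h6] by blast
  have i1: "((\<lambda>c. acctime (the ((M(p \<mapsto> ob1)) c))) ` set cs) = ((\<lambda>c. acctime (the (M c))) ` set cs)"
    using eq by auto
  have i2: "map (\<lambda>c. agents (the ((M(p \<mapsto> ob1)) c))) cs = map (\<lambda>c. agents (the (M c))) cs"
    using eq by auto
  have st: "step\<^sup>*\<^sup>* (Conf r M) (Conf r (M(p \<mapsto> ob')))" using converse_rtranclp_into_rtranclp[OF s1 o(1)] by simp
  have "acctime ob' = Max (insert (acctime ob1) ((\<lambda>c. acctime (the (M c))) ` set cs))"
    using o(5) unfolding i1 .
  then have a1: "acctime ob' = Max (insert (acctime ob) ((\<lambda>c. acctime (the (M c))) ` set (c # cs)))"
    using oc by (simp add: ob1_def Max_insert_max)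
  have "agents ob' = agents ob1 + sum_list (map (\<lambda>c. agents (the (M c))) cs)"
    using o(6) unfolding i2 .
  then have a2: "agents ob' = agents ob + sum_list (map (\<lambda>c. agents (the (M c))) (c # cs))"
    using oc by (simp add: ob1_def)
  have ot: "otime ob' = otime ob" using o(7) by (simp add: ob1_def)
  show ?case using st o(2-4) a1 a2 ot by blast
qed

lemma sand_loop:
  "M p = Some ob \<Longrightarrow> kind ob = KSand \<Longrightarrow> status ob = Unknown \<Longrightarrow> pend ob = ps @ rest \<Longrightarrow>
   p \<notin> set ps \<Longrightarrow> \<forall>c\<in>set ps. \<exists>oc. M c = Some oc \<and> status oc = Succeed \<Longrightarrow>
   \<exists>ob'. step\<^sup>*\<^sup>* (Conf r M) (Conf r (M(p \<mapsto> ob'))) \<and> kind ob' = KSand \<and> status ob' = Unknown \<and> pend ob' = rest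
     \<and> acctime ob' = acctime ob + sum_list (map (\<lambda>c. acctime (the (M c))) ps)
     \<and> agents ob \<le> agents ob' \<and> (\<forall>c\<in>set ps. agents (the (M c)) \<le> agents ob') \<and> otime ob' = otime ob"
proof (induction ps arbitrary: M ob)
  case Nil
  then show ?case by (intro exI[of _ ob]) (auto simp: fun_upd_idem)
next
  case (Cons c cs)
  obtain oc where oc: "M c = Some oc" "status oc = Succeed" using Cons.prems by auto
  define ob1 where "ob1 = ob\<lparr>pend := cs @ rest, used := used ob \<union> {c},
        acctime := acctime ob + acctime oc, acccost := acccost ob + acccost oc,
        agents := max (agents ob) (agents oc)\<rparr>"
  have s1: "step (Conf r M) (Conf r (M(p \<mapsto> ob1)))"
    unfolding ob1_def using Cons.prems oc by (intro sand_child) auto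
  have pe: "pend ob1 = cs @ rest" using Cons.prems by (auto simp: ob1_def)
  have h1: "(M(p \<mapsto> ob1)) p = Some ob1" by simp
  have h2: "kind ob1 = KSand" "status ob1 = Unknown" using Cons.prems by (auto simp: ob1_def)
  have h5: "p \<notin> set cs" using Cons.prems by auto
  have eq: "\<forall>c'\<in>set cs. (M(p \<mapsto> ob1)) c' = M c'" using Cons.prems by auto
  have h6: "\<forall>c\<in>set cs. \<exists>oc. (M(p \<mapsto> ob1)) c = Some oc \<and> status oc = Succeed" using Cons.prems by auto
  obtain ob' where o: "step\<^sup>*\<^sup>* (Conf r (M(p \<mapsto> ob1))) (Conf r ((M(p \<mapsto> ob1))(p \<mapsto> ob')))" "kind ob' = KSand" "status ob' = Unknown" "pend ob' = rest"
     "acctime ob' = acctime ob1 + sum_list (map (\<lambda>c. acctime (the ((M(p \<mapsto> ob1)) c))) cs)"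
     "agents ob1 \<le> agents ob'" "\<forall>c\<in>set cs. agents (the ((M(p \<mapsto> ob1)) c)) \<le> agents ob'" "otime ob' = otime ob1"
    using Cons.IH[OF h1 h2 pe h5 h6] by blast
  have i2: "map (\<lambda>c. acctime (the ((M(p \<mapsto> ob1)) c))) cs = map (\<lambda>c. acctime (the (M c))) cs"
    using eq by auto
  have st: "step\<^sup>*\<^sup>* (Conf r M) (Conf r (M(p \<mapsto> ob')))" using converse_rtranclp_into_rtranclp[OF s1 o(1)] by simp
  have "acctime ob' = acctime ob1 + sum_list (map (\<lambda>c. acctime (the (M c))) cs)"
    using o(5) unfolding i2 .
  then have a1: "acctime ob' = acctime ob + sum_list (map (\<lambda>c. acctime (the (M c))) (c # cs))"
    using oc by (simp add: ob1_def)
  have a2: "agents ob \<le> agents ob'" "agents oc \<le> agents ob'" using o(6) by (auto simp: ob1_def)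
  have a3: "\<forall>c'\<in>set (c#cs). agents (the (M c')) \<le> agents ob'" using a2 o(7) eq oc by auto
  have ot: "otime ob' = otime ob" using o(8) by (simp add: ob1_def)
  show ?case using st o(2-4) a1 a2 a3 ot by blast
qed

definition reach :: "pos \<Rightarrow> (obj \<Rightarrow> bool) \<Rightarrow> pos \<Rightarrow> (pos \<Rightarrow> obj option) \<Rightarrow> bool" where
  "reach r Q p M \<longleftrightarrow> (\<exists>M' ob. step\<^sup>*\<^sup>* (Conf r M) (Conf r M') \<and> (\<forall>x. \<not> pre p x \<longrightarrow> M' x = M x)
      \<and> M' p = Some ob \<and> Q ob)"

lemma pre_refl: "pre p p" by (auto simp: pre_def)

lemma reach_after:
  "step\<^sup>*\<^sup>* (Conf r M) (Conf r M1) \<Longrightarrow> \<forall>x. \<not> pre p x \<longrightarrow> M1 x = M x \<Longrightarrow>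
   step\<^sup>*\<^sup>* (Conf r M1) (Conf r (M1(p \<mapsto> ob))) \<Longrightarrow> Q ob \<Longrightarrow> reach r Q p M"
  unfolding reach_def
  apply (rule exI[of _ "M1(p \<mapsto> ob)"], rule exI[of _ ob])
  using pre_refl by (auto intro: rtranclp_trans)

lemma reach_single:
  "step (Conf r M) (Conf r (M(p \<mapsto> ob))) \<Longrightarrow> Q ob \<Longrightarrow> reach r Q p M"
  using reach_after[of r M M p ob Q] by auto

lemma loop_frame: "(\<forall>x. (\<forall>i<n. \<not> pre (p@[i]) x) \<longrightarrow> M1 x = M x) \<Longrightarrow>
   (\<forall>x. \<not> pre p x \<longrightarrow> M1 x = M x) \<and> M1 p = M p"
  using pre_child not_pre_self by blast

lemma child_frame: "(\<forall>x. \<not> pre (p@[i]) x \<longrightarrow> M1 x = M x) \<Longrightarrow>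
   (\<forall>x. \<not> pre p x \<longrightarrow> M1 x = M x) \<and> M1 p = M p"
  using pre_child not_pre_self by blast

lemma pend_list: "distinct (map (\<lambda>i. p @ [i]) [a..<b])" "p \<notin> set (map (\<lambda>i. p @ [i]) xs)"
  by (auto simp: distinct_map inj_on_def)

lemma total: "sat T out p \<or> unsat T out p"
proof (induction T arbitrary: p)
  case (ALeaf x1 x2)
  then show ?case by (cases "out p") (auto intro: sat_unsat.intros)
next
  case DLeaf
  then show ?case by (cases "out p") (auto intro: sat_unsat.intros)
next
  case (OrG g c cs)
  show ?case
  proof (cases "\<exists>i<length cs. sat (cs!i) out (p@[i])")
    case True then show ?thesis by (auto intro: sat_unsat.intros)
  next
    case False
    then have "\<forall>i<length cs. unsat (cs!i) out (p@[i])" using OrG.IH nth_mem by blast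
    then show ?thesis by (auto intro: sat_unsat.intros)
  qed
next
  case (AndG g c cs)
  then show ?case
    by (cases "\<exists>i<length cs. unsat (cs!i) out (p@[i])") (auto intro: sat_unsat.intros nth_mem)
next
  case (SandG g c cs)
  then show ?case
    by (cases "\<exists>i<length cs. unsat (cs!i) out (p@[i])") (auto intro: sat_unsat.intros nth_mem)
next
  case (NotG g c t)
  then show ?case by (auto intro: sat_unsat.intros)
qed

inductive_cases sOrE: "sat (OrG g c cs) out p"
inductive_cases uOrE: "unsat (OrG g c cs) out p"
inductive_cases sAndE: "sat (AndG g c cs) out p"
inductive_cases uAndE: "unsat (AndG g c cs) out p"
inductive_cases sSandE: "sat (SandG g c cs) out p"
inductive_cases uSandE: "unsat (SandG g c cs) out p"
inductive_cases sNotE: "sat (NotG g c t) out p"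
inductive_cases uNotE: "unsat (NotG g c t) out p"

lemma leaf_run:
  assumes "fresh T p M" "T = ALeaf tm cc \<or> T = DLeaf"
  shows "reach r (\<lambda>ob. status ob = Succeed) p M \<and> reach r (\<lambda>ob. status ob = Fail) p M"
proof -
  have m: "M p = Some (init_obj p T)" using fresh_root[OF assms(1)] .
  have k: "kind (init_obj p T) \<in> {KAtk, KDef}" "status (init_obj p T) = Unknown" using assms(2) by auto
  show ?thesis
    using reach_single[OF leaf_succ[where M=M and p=p and ob="init_obj p T" and r=r, OF m k]] reach_single[OF leaf_fail[where M=M and p=p and ob="init_obj p T" and r=r, OF m k]] by simp
qed

lemma or_sat_run:
  assumes fr: "fresh (OrG g c cs) p M" and i: "i < length cs"
    and ch: "reach r Q (p@[i]) M" and qs: "\<forall>ob. Q ob \<longrightarrow> status ob = Succeed"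
  shows "\<exists>M1 oc ob'. step\<^sup>*\<^sup>* (Conf r M) (Conf r M1) \<and> (\<forall>x. \<not> pre p x \<longrightarrow> M1 x = M x) \<and>
     M1 (p@[i]) = Some oc \<and> Q oc \<and>
     step (Conf r M1) (Conf r (M1(p \<mapsto> ob'))) \<and> ob' = (init_obj p (OrG g c cs))\<lparr>status := Succeed, pend := [], used := used (init_obj p (OrG g c cs)) \<union> {p@[i]},
        acctime := g + acctime oc, acccost := c + acccost oc, agents := agents oc\<rparr>"
proof -
  obtain M1 oc where m1: "step\<^sup>*\<^sup>* (Conf r M) (Conf r M1)" "\<forall>x. \<not> pre (p@[i]) x \<longrightarrow> M1 x = M x"
     "M1 (p@[i]) = Some oc" "Q oc" using ch unfolding reach_def by blast
  have f: "(\<forall>x. \<not> pre p x \<longrightarrow> M1 x = M x) \<and> M1 p = M p" using child_frame[OF m1(2)] .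
  have mp: "M1 p = Some (init_obj p (OrG g c cs))" using f fresh_root[OF fr] by simp
  have "step (Conf r M1) (Conf r (M1(p \<mapsto> (init_obj p (OrG g c cs))\<lparr>status := Succeed, pend := [], used := used (init_obj p (OrG g c cs)) \<union> {p@[i]},
        acctime := otime (init_obj p (OrG g c cs)) + acctime oc, acccost := ocost (init_obj p (OrG g c cs)) + acccost oc, agents := agents oc\<rparr>)))"
    by (rule or_succ[where M=M1 and p=p and c="p@[i]", OF mp]) (use i m1 qs in auto)
  then show ?thesis using m1 f by auto
qed

lemma reach_after2:
  "step\<^sup>*\<^sup>* (Conf r M) (Conf r M1) \<Longrightarrow> \<forall>x. \<not> pre p x \<longrightarrow> M1 x = M x \<Longrightarrow>
   step\<^sup>*\<^sup>* (Conf r M1) (Conf r (M1(p \<mapsto> ob1))) \<Longrightarrow>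
   step (Conf r (M1(p \<mapsto> ob1))) (Conf r ((M1(p \<mapsto> ob1))(p \<mapsto> ob2))) \<Longrightarrow> Q ob2 \<Longrightarrow> reach r Q p M"
  by (rule reach_after[of r M M1 p ob2 Q]) (auto intro: rtranclp.rtrancl_into_rtrancl)

lemma loop_all:
  assumes "\<forall>i<n. \<exists>ob. M1 (p@[i]) = Some ob \<and> Q ob"
  shows "\<forall>c\<in>set (map (\<lambda>i. p @ [i]) [0..<n]). \<exists>oc. M1 c = Some oc \<and> Q oc"
  using assms by auto

lemma su_run: "(sat T out p \<longrightarrow> (\<forall>M. fresh T p M \<longrightarrow> reach r (\<lambda>ob. status ob = Succeed) p M)) \<and>
  (unsat T out p \<longrightarrow> (\<forall>M. fresh T p M \<longrightarrow> reach r (\<lambda>ob. status ob = Fail) p M))"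
proof (induction T arbitrary: p)
  case (ALeaf x1 x2)
  then show ?case using leaf_run by blast
next
  case DLeaf
  then show ?case using leaf_run by blast
next
  case (OrG g c cs)
  have IHs: "\<forall>i<length cs. \<forall>M. fresh (cs!i) (p@[i]) M \<longrightarrow> reach r (\<lambda>ob. status ob = Succeed) (p@[i]) M"
    if "\<forall>i<length cs. sat (cs!i) out (p@[i])" using OrG.IH nth_mem that by blast
  have IHu: "\<forall>i<length cs. \<forall>M. fresh (cs!i) (p@[i]) M \<longrightarrow> reach r (\<lambda>ob. status ob = Fail) (p@[i]) M"
    if "\<forall>i<length cs. unsat (cs!i) out (p@[i])" using OrG.IH nth_mem that by blast
  show ?case
  proof (intro conjI impI allI)
    fix M assume sa: "sat (OrG g c cs) out p" and fr: "fresh (OrG g c cs) p M"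
    obtain i where i: "i < length cs" "sat (cs!i) out (p@[i])" using sa by (auto elim: sOrE)
    have ch: "reach r (\<lambda>ob. status ob = Succeed) (p@[i]) M"
      using OrG.IH[OF nth_mem[OF i(1)]] i fresh_Or[OF fr i(1)] by blast
    have qs: "\<forall>ob. status ob = Succeed \<longrightarrow> status ob = Succeed" by simp
    from or_sat_run[OF fr i(1) ch qs]
    show "reach r (\<lambda>ob. status ob = Succeed) p M"
    proof (elim exE conjE)
      fix M1 oc ob' assume o: "step\<^sup>*\<^sup>* (Conf r M) (Conf r M1)" "\<forall>x. \<not> pre p x \<longrightarrow> M1 x = M x"
       "step (Conf r M1) (Conf r (M1(p \<mapsto> ob')))" "ob' = (init_obj p (OrG g c cs))\<lparr>status := Succeed, pend := [], used := used (init_obj p (OrG g c cs)) \<union> {p@[i]},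
        acctime := g + acctime oc, acccost := c + acccost oc, agents := agents oc\<rparr>"
      then have "status ob' = Succeed" by simp
      with o show ?thesis by (blast intro: reach_after)
    qed
  next
    fix M assume sa: "unsat (OrG g c cs) out p" and fr: "fresh (OrG g c cs) p M"
    have "\<forall>i<length cs. unsat (cs!i) out (p@[i])" using sa by (auto elim: uOrE)
    note ih = IHu[OF this, unfolded reach_def]
    obtain M1 where m1: "step\<^sup>*\<^sup>* (Conf r M) (Conf r M1)" "\<forall>x. (\<forall>i<length cs. \<not> pre (p@[i]) x) \<longrightarrow> M1 x = M x"
      "\<forall>i<length cs. \<exists>ob. M1 (p@[i]) = Some ob \<and> status ob = Fail"
      using children_loop[of "length cs" cs p r "\<lambda>i ob. status ob = Fail" M] ih fresh_Or[OF fr] by blast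
    have f: "(\<forall>x. \<not> pre p x \<longrightarrow> M1 x = M x) \<and> M1 p = M p" using loop_frame[OF m1(2)] .
    have mp: "M1 p = Some (init_obj p (OrG g c cs))" using f fresh_root[OF fr] by simp
    obtain ob' where o: "step\<^sup>*\<^sup>* (Conf r M1) (Conf r (M1(p \<mapsto> ob')))" "kind ob' = KOr" "status ob' = Unknown" "pend ob' = []"
      using or_loop[where M=M1 and p=p and ob="init_obj p (OrG g c cs)" and ps="map (\<lambda>i. p @ [i]) [0..<length cs]" and rest="[]" and r=r]
        mp pend_list loop_all[OF m1(3)] by auto
    have s2: "step (Conf r (M1(p \<mapsto> ob'))) (Conf r ((M1(p \<mapsto> ob'))(p \<mapsto> ob'\<lparr>status := Fail\<rparr>)))"
      by (rule or_fail) (use o in auto)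
    show "reach r (\<lambda>ob. status ob = Fail) p M"
      by (rule reach_after2[OF m1(1) conjunct1[OF f] o(1) s2]) simp
  qed
next
  case (AndG g c cs)
  have IHs: "\<forall>i<length cs. \<forall>M. fresh (cs!i) (p@[i]) M \<longrightarrow> reach r (\<lambda>ob. status ob = Succeed) (p@[i]) M"
    if "\<forall>i<length cs. sat (cs!i) out (p@[i])" using AndG.IH nth_mem that by blast
  show ?case
  proof (intro conjI impI allI)
    fix M assume sa: "unsat (AndG g c cs) out p" and fr: "fresh (AndG g c cs) p M"
    obtain i where i: "i < length cs" "unsat (cs!i) out (p@[i])" using sa by (auto elim: uAndE)
    have ch: "reach r (\<lambda>ob. status ob = Fail) (p@[i]) M"
      using AndG.IH[OF nth_mem[OF i(1)]] i fresh_And[OF fr i(1)] by blast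
    obtain M1 oc where m1: "step\<^sup>*\<^sup>* (Conf r M) (Conf r M1)" "\<forall>x. \<not> pre (p@[i]) x \<longrightarrow> M1 x = M x"
     "M1 (p@[i]) = Some oc" "status oc = Fail" using ch unfolding reach_def by blast
    have f: "(\<forall>x. \<not> pre p x \<longrightarrow> M1 x = M x) \<and> M1 p = M p" using child_frame[OF m1(2)] .
    have mp: "M1 p = Some (init_obj p (AndG g c cs))" using f fresh_root[OF fr] by simp
    have "step (Conf r M1) (Conf r (M1(p \<mapsto> (init_obj p (AndG g c cs))\<lparr>status := Fail\<rparr>)))"
      by (rule and_fail[where M=M1 and p=p and c="p@[i]", OF mp]) (use i m1 in auto)
    then show "reach r (\<lambda>ob. status ob = Fail) p M"
      using m1(1) f by (auto intro: reach_after)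
  next
    fix M assume sa: "sat (AndG g c cs) out p" and fr: "fresh (AndG g c cs) p M"
    have "\<forall>i<length cs. sat (cs!i) out (p@[i])" using sa by (auto elim: sAndE)
    note ih = IHs[OF this, unfolded reach_def]
    obtain M1 where m1: "step\<^sup>*\<^sup>* (Conf r M) (Conf r M1)" "\<forall>x. (\<forall>i<length cs. \<not> pre (p@[i]) x) \<longrightarrow> M1 x = M x"
      "\<forall>i<length cs. \<exists>ob. M1 (p@[i]) = Some ob \<and> status ob = Succeed"
      using children_loop[of "length cs" cs p r "\<lambda>i ob. status ob = Succeed" M] ih fresh_And[OF fr] by blast
    have f: "(\<forall>x. \<not> pre p x \<longrightarrow> M1 x = M x) \<and> M1 p = M p" using loop_frame[OF m1(2)] .
    have mp: "M1 p = Some (init_obj p (AndG g c cs))" using f fresh_root[OF fr] by simp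
    obtain ob' where o: "step\<^sup>*\<^sup>* (Conf r M1) (Conf r (M1(p \<mapsto> ob')))" "kind ob' = KAnd" "status ob' = Unknown" "pend ob' = []"
      using and_loop[where M=M1 and p=p and ob="init_obj p (AndG g c cs)" and ps="map (\<lambda>i. p @ [i]) [0..<length cs]" and rest="[]" and r=r]
        mp pend_list loop_all[OF m1(3)] by auto
    have s2: "step (Conf r (M1(p \<mapsto> ob'))) (Conf r ((M1(p \<mapsto> ob'))(p \<mapsto> ob'\<lparr>status := Succeed,
        acctime := acctime ob' + otime ob', acccost := acccost ob' + ocost ob'\<rparr>)))"
      by (rule and_succ) (use o in auto)
    show "reach r (\<lambda>ob. status ob = Succeed) p M"
      by (rule reach_after2[OF m1(1) conjunct1[OF f] o(1) s2]) simp
  qed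
next
  case (SandG g c cs)
  have IHs: "\<forall>i<n. \<forall>M. fresh (cs!i) (p@[i]) M \<longrightarrow> reach r (\<lambda>ob. status ob = Succeed) (p@[i]) M"
    if "\<forall>i<n. sat (cs!i) out (p@[i])" "n \<le> length cs" for n
    using SandG.IH nth_mem that by (meson order_less_le_trans)
  show ?case
  proof (intro conjI impI allI)
    fix M assume sa: "unsat (SandG g c cs) out p" and fr: "fresh (SandG g c cs) p M"
    obtain i0 where i0: "i0 < length cs" "unsat (cs!i0) out (p@[i0])" using sa by (auto elim: uSandE)
    define j where "j = (LEAST j. j < length cs \<and> unsat (cs!j) out (p@[j]))"
    have j: "j < length cs" "unsat (cs!j) out (p@[j])"
      using LeastI[of "\<lambda>j. j < length cs \<and> unsat (cs!j) out (p@[j])", OF conjI[OF i0]] unfolding j_def by auto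
    have "\<forall>k<j. \<not> (k < length cs \<and> unsat (cs!k) out (p@[k]))"
      unfolding j_def using not_less_Least by blast
    then have before: "\<forall>k<j. sat (cs!k) out (p@[k])" using total j(1) by (meson order_less_trans)
    note ih = IHs[OF before order_less_imp_le[OF j(1)], unfolded reach_def]
    obtain M1 where m1: "step\<^sup>*\<^sup>* (Conf r M) (Conf r M1)" "\<forall>x. (\<forall>i<j. \<not> pre (p@[i]) x) \<longrightarrow> M1 x = M x"
      "\<forall>i<j. \<exists>ob. M1 (p@[i]) = Some ob \<and> status ob = Succeed"
      using children_loop[of j cs p r "\<lambda>i ob. status ob = Succeed" M] ih fresh_Sand[OF fr] j(1) by auto
    have f0: "fresh (cs!j) (p@[j]) M" using fresh_Sand[OF fr j(1)] .
    have frj: "fresh (cs!j) (p@[j]) M1"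
      unfolding fresh_def
    proof
      fix q
      have "\<forall>i<j. \<not> pre (p@[i]) ((p@[j])@q)" using not_pre_other by auto
      then have "M1 ((p@[j])@q) = M ((p@[j])@q)" using m1(2) by blast
      then show "M1 ((p @ [j]) @ q) = map_option (init_obj ((p @ [j]) @ q)) (node_at (cs ! j) q)"
        using f0 unfolding fresh_def by simp
    qed
    have ch: "reach r (\<lambda>ob. status ob = Fail) (p@[j]) M1"
      using SandG.IH[OF nth_mem[OF j(1)]] j frj by blast
    obtain M2 oc where m2: "step\<^sup>*\<^sup>* (Conf r M1) (Conf r M2)" "\<forall>x. \<not> pre (p@[j]) x \<longrightarrow> M2 x = M1 x"
     "M2 (p@[j]) = Some oc" "status oc = Fail" using ch unfolding reach_def by blast
    have f1: "(\<forall>x. \<not> pre p x \<longrightarrow> M1 x = M x) \<and> M1 p = M p" using loop_frame[OF m1(2)] .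
    have f2: "(\<forall>x. \<not> pre p x \<longrightarrow> M2 x = M1 x) \<and> M2 p = M1 p" using child_frame[OF m2(2)] .
    have f: "\<forall>x. \<not> pre p x \<longrightarrow> M2 x = M x" using f1 f2 by simp
    have mp: "M2 p = Some (init_obj p (SandG g c cs))" using f1 f2 fresh_root[OF fr] by simp
    have m2i: "\<forall>i<j. \<exists>ob. M2 (p@[i]) = Some ob \<and> status ob = Succeed"
    proof (intro allI impI)
      fix i assume "i < j"
      then have "\<not> pre (p@[j]) (p@[i])" using not_pre_other[of j i p "[]"] by simp
      then show "\<exists>ob. M2 (p@[i]) = Some ob \<and> status ob = Succeed" using m2(2) m1(3) \<open>i < j\<close> by simp
    qed
    have up: "[0..<length cs] = [0..<j] @ j # [Suc j..<length cs]"
      using upt_add_eq_append[of 0 j "length cs - j"] j(1) upt_conv_Cons[of j "length cs"] by simp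
    have pe: "pend (init_obj p (SandG g c cs)) = map (\<lambda>i. p @ [i]) [0..<j] @ ((p@[j]) # map (\<lambda>i. p @ [i]) [Suc j..<length cs])"
      by (simp add: up)
    obtain ob' where o: "step\<^sup>*\<^sup>* (Conf r M2) (Conf r (M2(p \<mapsto> ob')))" "kind ob' = KSand" "status ob' = Unknown"
        "pend ob' = (p@[j]) # map (\<lambda>i. p @ [i]) [Suc j..<length cs]"
      using sand_loop[where M=M2 and p=p and ob="init_obj p (SandG g c cs)" and ps="map (\<lambda>i. p @ [i]) [0..<j]" and r=r, OF mp _ _ pe]
        pend_list loop_all[OF m2i] by auto
    have s2: "step (Conf r (M2(p \<mapsto> ob'))) (Conf r ((M2(p \<mapsto> ob'))(p \<mapsto> ob'\<lparr>status := Fail\<rparr>)))"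
      by (rule sand_fail[where c="p@[j]"]) (use o m2 in auto)
    show "reach r (\<lambda>ob. status ob = Fail) p M"
      by (rule reach_after2[OF rtranclp_trans[OF m1(1) m2(1)] f o(1) s2]) simp
  next
    fix M assume sa: "sat (SandG g c cs) out p" and fr: "fresh (SandG g c cs) p M"
    have "\<forall>i<length cs. sat (cs!i) out (p@[i])" using sa by (auto elim: sSandE)
    note ih = IHs[OF this order_refl, unfolded reach_def]
    obtain M1 where m1: "step\<^sup>*\<^sup>* (Conf r M) (Conf r M1)" "\<forall>x. (\<forall>i<length cs. \<not> pre (p@[i]) x) \<longrightarrow> M1 x = M x"
      "\<forall>i<length cs. \<exists>ob. M1 (p@[i]) = Some ob \<and> status ob = Succeed"
      using children_loop[of "length cs" cs p r "\<lambda>i ob. status ob = Succeed" M] ih fresh_Sand[OF fr] by blast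
    have f: "(\<forall>x. \<not> pre p x \<longrightarrow> M1 x = M x) \<and> M1 p = M p" using loop_frame[OF m1(2)] .
    have mp: "M1 p = Some (init_obj p (SandG g c cs))" using f fresh_root[OF fr] by simp
    obtain ob' where o: "step\<^sup>*\<^sup>* (Conf r M1) (Conf r (M1(p \<mapsto> ob')))" "kind ob' = KSand" "status ob' = Unknown" "pend ob' = []"
      using sand_loop[where M=M1 and p=p and ob="init_obj p (SandG g c cs)" and ps="map (\<lambda>i. p @ [i]) [0..<length cs]" and rest="[]" and r=r]
        mp pend_list loop_all[OF m1(3)] by auto
    have s2: "step (Conf r (M1(p \<mapsto> ob'))) (Conf r ((M1(p \<mapsto> ob'))(p \<mapsto> ob'\<lparr>status := Succeed,
        acctime := acctime ob' + otime ob', acccost := acccost ob' + ocost ob'\<rparr>)))"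
      by (rule sand_succ) (use o in auto)
    show "reach r (\<lambda>ob. status ob = Succeed) p M"
      by (rule reach_after2[OF m1(1) conjunct1[OF f] o(1) s2]) simp
  qed
next
  case (NotG g c t)
  show ?case
  proof (intro conjI impI allI)
    fix M assume sa: "sat (NotG g c t) out p" and fr: "fresh (NotG g c t) p M"
    have "unsat t out (p@[0])" using sa by (auto elim: sNotE)
    then have ch: "reach r (\<lambda>ob. status ob = Fail) (p@[0]) M"
      using NotG.IH fresh_Not[OF fr] by blast
    obtain M1 oc where m1: "step\<^sup>*\<^sup>* (Conf r M) (Conf r M1)" "\<forall>x. \<not> pre (p@[0]) x \<longrightarrow> M1 x = M x"
     "M1 (p@[0]) = Some oc" "status oc = Fail" using ch unfolding reach_def by blast
    have f: "(\<forall>x. \<not> pre p x \<longrightarrow> M1 x = M x) \<and> M1 p = M p" using child_frame[OF m1(2)] .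
    have mp: "M1 p = Some (init_obj p (NotG g c t))" using f fresh_root[OF fr] by simp
    have "step (Conf r M1) (Conf r (M1(p \<mapsto> (init_obj p (NotG g c t))\<lparr>status := Succeed,
        acctime := otime (init_obj p (NotG g c t)), acccost := ocost (init_obj p (NotG g c t))\<rparr>)))"
      by (rule not_succ[where M=M1 and p=p and c="p@[0]", OF mp]) (use m1 in auto)
    then show "reach r (\<lambda>ob. status ob = Succeed) p M"
      using m1(1) f by (auto intro: reach_after)
  next
    fix M assume sa: "unsat (NotG g c t) out p" and fr: "fresh (NotG g c t) p M"
    have "sat t out (p@[0])" using sa by (auto elim: uNotE)
    then have ch: "reach r (\<lambda>ob. status ob = Succeed) (p@[0]) M"
      using NotG.IH fresh_Not[OF fr] by blast
    obtain M1 oc where m1: "step\<^sup>*\<^sup>* (Conf r M) (Conf r M1)" "\<forall>x. \<not> pre (p@[0]) x \<longrightarrow> M1 x = M x"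
     "M1 (p@[0]) = Some oc" "status oc = Succeed" using ch unfolding reach_def by blast
    have f: "(\<forall>x. \<not> pre p x \<longrightarrow> M1 x = M x) \<and> M1 p = M p" using child_frame[OF m1(2)] .
    have mp: "M1 p = Some (init_obj p (NotG g c t))" using f fresh_root[OF fr] by simp
    have "step (Conf r M1) (Conf r (M1(p \<mapsto> (init_obj p (NotG g c t))\<lparr>status := Fail\<rparr>)))"
      by (rule not_fail[where M=M1 and p=p and c="p@[0]", OF mp]) (use m1 in auto)
    then show "reach r (\<lambda>ob. status ob = Fail) p M"
      using m1(1) f by (auto intro: reach_after)
  qed
qed

lemma chain_mono: "(\<forall>i<n. st i \<le> st (Suc i)) \<Longrightarrow> i \<le> k \<Longrightarrow> k \<le> n \<Longrightarrow> (st i :: nat) \<le> st k"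
proof (induction k)
  case 0 then show ?case by simp
next
  case (Suc k)
  then show ?case by (cases "i = Suc k") (auto simp: le_Suc_eq intro: order_trans)
qed

lemma exec_bounds: "exec T out p s J f \<Longrightarrow> s \<le> f \<and> (\<forall>j\<in>J. s \<le> fst (snd j) \<and> snd (snd j) \<le> f)"
proof (induction rule: exec.induct)
  case (eAnd cs out p s JJ ff g c)
  have fin: "finite (insert s (ff ` {..<length cs}))" by simp
  have h1: "s \<le> Max (insert s (ff ` {..<length cs}))" using Max_ge[OF fin] by simp
  have m: "ff i \<le> Max (insert s (ff ` {..<length cs}))" if "i < length cs" for i
    using Max_ge[OF fin] that by simp
  show ?case
  proof (intro conjI ballI)
    show "s \<le> Max (insert s (ff ` {..<length cs})) + g" by (rule trans_le_add1[OF h1])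
  next
    fix j assume "j \<in> \<Union> (JJ ` {..<length cs})"
    then obtain i where i: "i < length cs" "j \<in> JJ i" by auto
    then have "s \<le> fst (snd j)" "snd (snd j) \<le> ff i" using eAnd by blast+
    then show "s \<le> fst (snd j)" "snd (snd j) \<le> Max (insert s (ff ` {..<length cs})) + g"
      using m[OF i(1)] by linarith+
  qed
next
  case (eSand st s cs out p JJ g c)
  have mono: "\<forall>i<length cs. st i \<le> st (Suc i)" using eSand by blast
  have h1: "st 0 \<le> st (length cs)" using chain_mono[OF mono] by simp
  have m: "st 0 \<le> st i" "st (Suc i) \<le> st (length cs)" if "i < length cs" for i
    using chain_mono[OF mono] that by auto
  show ?case
  proof (intro conjI ballI)
    show "s \<le> st (length cs) + g" using eSand h1 by simp
  next
    fix j assume "j \<in> \<Union> (JJ ` {..<length cs})"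
    then obtain i where i: "i < length cs" "j \<in> JJ i" by auto
    then have "st i \<le> fst (snd j)" "snd (snd j) \<le> st (Suc i)" using eSand by blast+
    then show "s \<le> fst (snd j)" "snd (snd j) \<le> st (length cs) + g"
      using m(1)[OF i(1)] m(2)[OF i(1)] eSand(1) by linarith+
  qed
qed auto


lemma fits_mono: "fits J a \<Longrightarrow> a \<le> b \<Longrightarrow> fits J b"
proof -
  assume "fits J a" "a \<le> b"
  then obtain ag where "\<forall>j \<in> J. ag j < a" "\<forall>j1 \<in> J. \<forall>j2 \<in> J. j1 \<noteq> j2 \<and> ag j1 = ag j2 \<longrightarrow>
          snd (snd j1) \<le> fst (snd j2) \<or> snd (snd j2) \<le> fst (snd j1)" unfolding fits_def by blast
  then show ?thesis unfolding fits_def using \<open>a \<le> b\<close> by (intro exI[of _ ag]) auto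
qed

lemma fits_empty: "fits {} 0"
  unfolding fits_def by simp

lemma fits_single: "fits {x} 1"
  unfolding fits_def by (intro exI[of _ "\<lambda>_. 0"]) simp

lemma fits_union: "fits A a \<Longrightarrow> fits B b \<Longrightarrow> fits (A \<union> B) (a + b)"
proof -
  assume "fits A a" "fits B b"
  then obtain agA agB where A: "\<forall>j \<in> A. agA j < a" "\<forall>j1 \<in> A. \<forall>j2 \<in> A. j1 \<noteq> j2 \<and> agA j1 = agA j2 \<longrightarrow>
          snd (snd j1) \<le> fst (snd j2) \<or> snd (snd j2) \<le> fst (snd j1)"
    and B: "\<forall>j \<in> B. agB j < b" "\<forall>j1 \<in> B. \<forall>j2 \<in> B. j1 \<noteq> j2 \<and> agB j1 = agB j2 \<longrightarrow>
          snd (snd j1) \<le> fst (snd j2) \<or> snd (snd j2) \<le> fst (snd j1)"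
    unfolding fits_def by blast
  define ag where "ag j = (if j \<in> A then agA j else a + agB j)" for j
  show ?thesis unfolding fits_def
  proof (intro exI[of _ ag] conjI ballI impI)
    fix j assume "j \<in> A \<union> B" then show "ag j < a + b" using A B by (auto simp: ag_def)
  next
    fix j1 j2 assume j: "j1 \<in> A \<union> B" "j2 \<in> A \<union> B" "j1 \<noteq> j2 \<and> ag j1 = ag j2"
    show "snd (snd j1) \<le> fst (snd j2) \<or> snd (snd j2) \<le> fst (snd j1)"
    proof (cases "j1 \<in> A"; cases "j2 \<in> A")
      assume "j1 \<in> A" "j2 \<in> A" then show ?thesis using A j by (auto simp: ag_def)
    next
      assume "j1 \<in> A" "j2 \<notin> A" then show ?thesis using A j by (auto simp: ag_def)
    next
      assume "j1 \<notin> A" "j2 \<in> A" then show ?thesis using A j by (auto simp: ag_def)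
    next
      assume "j1 \<notin> A" "j2 \<notin> A" then show ?thesis using B j by (auto simp: ag_def)
    qed
  qed
qed

lemma fits_seq2: "fits A m \<Longrightarrow> fits B m \<Longrightarrow> \<forall>j\<in>A. snd (snd j) \<le> t \<Longrightarrow> \<forall>j\<in>B. t \<le> fst (snd j)
  \<Longrightarrow> fits (A \<union> B) m"
proof -
  assume "fits A m" "fits B m" and tA: "\<forall>j\<in>A. snd (snd j) \<le> t" and tB: "\<forall>j\<in>B. t \<le> fst (snd j)"
  then obtain agA agB where A: "\<forall>j \<in> A. agA j < m" "\<forall>j1 \<in> A. \<forall>j2 \<in> A. j1 \<noteq> j2 \<and> agA j1 = agA j2 \<longrightarrow>
          snd (snd j1) \<le> fst (snd j2) \<or> snd (snd j2) \<le> fst (snd j1)"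
    and B: "\<forall>j \<in> B. agB j < m" "\<forall>j1 \<in> B. \<forall>j2 \<in> B. j1 \<noteq> j2 \<and> agB j1 = agB j2 \<longrightarrow>
          snd (snd j1) \<le> fst (snd j2) \<or> snd (snd j2) \<le> fst (snd j1)"
    unfolding fits_def by blast
  define ag where "ag j = (if j \<in> A then agA j else agB j)" for j
  show ?thesis unfolding fits_def
  proof (intro exI[of _ ag] conjI ballI impI)
    fix j assume "j \<in> A \<union> B" then show "ag j < m" using A B by (auto simp: ag_def)
  next
    fix j1 j2 assume j: "j1 \<in> A \<union> B" "j2 \<in> A \<union> B" "j1 \<noteq> j2 \<and> ag j1 = ag j2"
    show "snd (snd j1) \<le> fst (snd j2) \<or> snd (snd j2) \<le> fst (snd j1)"
    proof (cases "j1 \<in> A"; cases "j2 \<in> A")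
      assume "j1 \<in> A" "j2 \<in> A" then show ?thesis using A j by (auto simp: ag_def)
    next
      assume "j1 \<in> A" "j2 \<notin> A" then show ?thesis using tA tB j by (auto intro: order_trans)
    next
      assume "j1 \<notin> A" "j2 \<in> A" then show ?thesis using tA tB j by (auto intro: order_trans)
    next
      assume "j1 \<notin> A" "j2 \<notin> A" then show ?thesis using B j by (auto simp: ag_def)
    qed
  qed
qed

lemma fits_UN_sum: "(\<forall>i<(n::nat). fits (JJ i) (a i)) \<Longrightarrow> fits (\<Union>i<n. JJ i) (\<Sum>i<n. a i)"
proof (induction n)
  case 0 then show ?case using fits_empty by simp
next
  case (Suc n)
  then have "fits ((\<Union>i<n. JJ i) \<union> JJ n) ((\<Sum>i<n. a i) + a n)" by (intro fits_union) auto
  then show ?case by (simp add: lessThan_Suc Un_commute add.commute)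
qed

lemma fits_UN_seq: "(\<forall>i<n. fits (JJ i) m) \<Longrightarrow>
   (\<forall>i<n. \<forall>j\<in>JJ i. st i \<le> fst (snd j) \<and> snd (snd j) \<le> st (Suc i)) \<Longrightarrow>
   (\<forall>i<n. st i \<le> (st (Suc i) :: nat)) \<Longrightarrow> fits (\<Union>i<n. JJ i) m"
proof (induction n)
  case 0 then show ?case unfolding fits_def by simp
next
  case (Suc n)
  have a: "fits (\<Union>i<n. JJ i) m" using Suc by auto
  have b: "\<forall>j\<in>(\<Union>i<n. JJ i). snd (snd j) \<le> st n"
  proof
    fix j assume "j \<in> (\<Union>i<n. JJ i)"
    then obtain i where i: "i < n" "j \<in> JJ i" by auto
    have "snd (snd j) \<le> st (Suc i)" using Suc.prems(2) i by auto
    also have "st (Suc i) \<le> st n" using chain_mono[of "Suc n" st "Suc i" n] Suc.prems(3) i by auto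
    finally show "snd (snd j) \<le> st n" .
  qed
  have "fits ((\<Union>i<n. JJ i) \<union> JJ n) m"
    by (rule fits_seq2[OF a _ b]) (use Suc.prems in auto)
  then show ?case by (simp add: lessThan_Suc Un_commute)
qed

lemma telescope: "(\<forall>i<n. st i \<le> st (Suc i)) \<Longrightarrow> (\<Sum>i<n. st (Suc i) - st i) = st n - (st 0 :: nat)"
proof (induction n)
  case 0 then show ?case by simp
next
  case (Suc n)
  have "st 0 \<le> st n" using chain_mono[of "Suc n" st 0 n] Suc.prems by auto
  moreover have "st n \<le> st (Suc n)" using Suc.prems by auto
  ultimately show ?case using Suc by simp
qed

lemma Max_shift: "finite (I :: 'a set) \<Longrightarrow> Max (insert s (ff ` I)) - (s::nat) = Max (insert 0 ((\<lambda>i. ff i - s) ` I))"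
proof -
  assume fin: "finite I"
  have "mono (\<lambda>x::nat. x - s)" by (auto intro: monoI)
  then have "Max (insert s (ff ` I)) - s = Max ((\<lambda>x. x - s) ` insert s (ff ` I))"
    using mono_Max_commute[of "\<lambda>x::nat. x - s" "insert s (ff ` I)"] fin by simp
  also have "(\<lambda>x. x - s) ` insert s (ff ` I) = insert 0 ((\<lambda>i. ff i - s) ` I)" by auto
  finally show ?thesis .
qed

lemma sum_list_map_upt: "sum_list (map f (map (\<lambda>i. p @ [i]) [0..<n])) = (\<Sum>i<n. f (p @ [i]))"
  by (simp add: sum_list_sum_nth atLeast0LessThan)

lemma exec_run: "exec T out p s J f \<Longrightarrow> \<forall>M. fresh T p M \<longrightarrow>
  reach r (\<lambda>ob. status ob = Succeed \<and> acctime ob = f - s \<and> fits J (agents ob)) p M"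
proof (induction rule: exec.induct)
  case (eA out p tm c s)
  show ?case
  proof (intro allI impI)
    fix M assume fr: "fresh (ALeaf tm c) p M"
    have m: "M p = Some (init_obj p (ALeaf tm c))" using fresh_root[OF fr] .
    have k: "kind (init_obj p (ALeaf tm c)) \<in> {KAtk, KDef}" "status (init_obj p (ALeaf tm c)) = Unknown" by auto
    show "reach r (\<lambda>ob. status ob = Succeed \<and> acctime ob = s + tm - s \<and> fits {(p, s, s + tm)} (agents ob)) p M"
      using reach_single[OF leaf_succ[where M=M and p=p and ob="init_obj p (ALeaf tm c)" and r=r, OF m k]] fits_single
      by simp
  qed
next
  case (eD out p s)
  show ?case
  proof (intro allI impI)
    fix M assume fr: "fresh DLeaf p M"
    have m: "M p = Some (init_obj p DLeaf)" using fresh_root[OF fr] .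
    have k: "kind (init_obj p DLeaf) \<in> {KAtk, KDef}" "status (init_obj p DLeaf) = Unknown" by auto
    show "reach r (\<lambda>ob. status ob = Succeed \<and> acctime ob = s - s \<and> fits {} (agents ob)) p M"
      using reach_single[OF leaf_succ[where M=M and p=p and ob="init_obj p DLeaf" and r=r, OF m k]] fits_empty
      by simp
  qed
next
  case (eOr i cs out p s J f g c)
  have sf: "s \<le> f" using exec_bounds[OF eOr.hyps(2)] by simp
  show ?case
  proof (intro allI impI)
    fix M assume fr: "fresh (OrG g c cs) p M"
    have ch: "reach r (\<lambda>ob. status ob = Succeed \<and> acctime ob = f - s \<and> fits J (agents ob)) (p@[i]) M"
      using eOr.IH fresh_Or[OF fr eOr.hyps(1)] by blast
    have qs: "\<forall>ob. status ob = Succeed \<and> acctime ob = f - s \<and> fits J (agents ob) \<longrightarrow> status ob = Succeed" by simp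
    from or_sat_run[where Q="\<lambda>ob. status ob = Succeed \<and> acctime ob = f - s \<and> fits J (agents ob)", OF fr eOr.hyps(1) ch qs]
    show "reach r (\<lambda>ob. status ob = Succeed \<and> acctime ob = f + g - s \<and> fits J (agents ob)) p M"
    proof (elim exE conjE)
      fix M1 oc ob' assume o: "step\<^sup>*\<^sup>* (Conf r M) (Conf r M1)" "\<forall>x. \<not> pre p x \<longrightarrow> M1 x = M x"
       "status oc = Succeed" "acctime oc = f - s" "fits J (agents oc)"
       "step (Conf r M1) (Conf r (M1(p \<mapsto> ob')))" "ob' = (init_obj p (OrG g c cs))\<lparr>status := Succeed, pend := [], used := used (init_obj p (OrG g c cs)) \<union> {p@[i]},
        acctime := g + acctime oc, acccost := c + acccost oc, agents := agents oc\<rparr>"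
      have "status ob' = Succeed \<and> acctime ob' = f + g - s \<and> fits J (agents ob')"
        using o(3-5,7) sf by simp
      then show ?thesis using o(1,2,6) by (blast intro: reach_after)
    qed
  qed
next
  case (eAnd cs out p s JJ ff g c)
  let ?n = "length cs"
  let ?Q = "\<lambda>i ob. status ob = Succeed \<and> acctime ob = ff i - s \<and> fits (JJ i) (agents ob)"
  have sf: "\<forall>i<?n. s \<le> ff i"
  proof (intro allI impI)
    fix i assume "i < ?n"
    then have "exec (cs!i) out (p@[i]) s (JJ i) (ff i)" using eAnd.IH by blast
    then show "s \<le> ff i" using exec_bounds by blast
  qed
  show ?case
  proof (intro allI impI)
    fix M assume fr: "fresh (AndG g c cs) p M"
    have ih: "\<forall>i<?n. \<forall>M. fresh (cs!i) (p@[i]) M \<longrightarrow> (\<exists>M' ob. step\<^sup>*\<^sup>* (Conf r M) (Conf r M') \<and>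
      (\<forall>x. \<not> pre (p@[i]) x \<longrightarrow> M' x = M x) \<and> M' (p@[i]) = Some ob \<and> ?Q i ob)"
      using eAnd.IH unfolding reach_def by blast
    obtain M1 where m1: "step\<^sup>*\<^sup>* (Conf r M) (Conf r M1)" "\<forall>x. (\<forall>i<?n. \<not> pre (p@[i]) x) \<longrightarrow> M1 x = M x"
      "\<forall>i<?n. \<exists>ob. M1 (p@[i]) = Some ob \<and> ?Q i ob"
      using children_loop[of ?n cs p r ?Q M] ih fresh_And[OF fr] by blast
    have f: "(\<forall>x. \<not> pre p x \<longrightarrow> M1 x = M x) \<and> M1 p = M p" using loop_frame[OF m1(2)] .
    have mp: "M1 p = Some (init_obj p (AndG g c cs))" using f fresh_root[OF fr] by simp
    have all: "\<forall>c\<in>set (map (\<lambda>i. p @ [i]) [0..<?n]). \<exists>oc. M1 c = Some oc \<and> status oc = Succeed"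
      using m1(3) by auto
    obtain ob' where o: "step\<^sup>*\<^sup>* (Conf r M1) (Conf r (M1(p \<mapsto> ob')))" "kind ob' = KAnd" "status ob' = Unknown" "pend ob' = []"
      "acctime ob' = Max (insert 0 ((\<lambda>c. acctime (the (M1 c))) ` set (map (\<lambda>i. p @ [i]) [0..<?n])))"
      "agents ob' = 0 + sum_list (map (\<lambda>c. agents (the (M1 c))) (map (\<lambda>i. p @ [i]) [0..<?n]))" "otime ob' = g"
      using and_loop[where M=M1 and p=p and ob="init_obj p (AndG g c cs)" and ps="map (\<lambda>i. p @ [i]) [0..<?n]" and rest="[]" and r=r]
        mp pend_list all by auto
    have s2: "step (Conf r (M1(p \<mapsto> ob'))) (Conf r ((M1(p \<mapsto> ob'))(p \<mapsto> ob'\<lparr>status := Succeed,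
        acctime := acctime ob' + otime ob', acccost := acccost ob' + ocost ob'\<rparr>)))"
      by (rule and_succ) (use o in auto)
    show "reach r (\<lambda>ob. status ob = Succeed \<and> acctime ob = Max (insert s (ff ` {..<?n})) + g - s \<and>
        fits (\<Union> (JJ ` {..<?n})) (agents ob)) p M"
    proof (rule reach_after2[OF m1(1) conjunct1[OF f] o(1) s2])
      have ai: "\<forall>i<?n. acctime (the (M1 (p@[i]))) = ff i - s \<and> fits (JJ i) (agents (the (M1 (p@[i]))))"
        using m1(3) by force
      have "(\<lambda>c. acctime (the (M1 c))) ` set (map (\<lambda>i. p @ [i]) [0..<?n]) = (\<lambda>i. acctime (the (M1 (p@[i])))) ` {..<?n}"
        by (simp add: image_image atLeast0LessThan)
      also have "\<dots> = (\<lambda>i. ff i - s) ` {..<?n}"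
        by (rule image_cong) (use ai in auto)
      finally have "acctime ob' = Max (insert s (ff ` {..<?n})) - s"
        using o(5) Max_shift[of "{..<?n}" s ff] by simp
      moreover have "s \<le> Max (insert s (ff ` {..<?n}))" by simp
      moreover have "agents ob' = (\<Sum>i<?n. agents (the (M1 (p@[i]))))"
        using o(6) sum_list_map_upt[of "\<lambda>c. agents (the (M1 c))" p ?n] by simp
      moreover have "fits (\<Union> (JJ ` {..<?n})) (\<Sum>i<?n. agents (the (M1 (p@[i]))))"
        by (rule fits_UN_sum) (use ai in auto)
      ultimately show "status (ob'\<lparr>status := Succeed, acctime := acctime ob' + otime ob', acccost := acccost ob' + ocost ob'\<rparr>) = Succeed \<and>
        acctime (ob'\<lparr>status := Succeed, acctime := acctime ob' + otime ob', acccost := acccost ob' + ocost ob'\<rparr>) = Max (insert s (ff ` {..<?n})) + g - s \<and>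
        fits (\<Union> (JJ ` {..<?n})) (agents (ob'\<lparr>status := Succeed, acctime := acctime ob' + otime ob', acccost := acccost ob' + ocost ob'\<rparr>))"
        using o(7) by simp
    qed
  qed
next
  case (eSand st s cs out p JJ g c)
  let ?n = "length cs"
  let ?Q = "\<lambda>i ob. status ob = Succeed \<and> acctime ob = st (Suc i) - st i \<and> fits (JJ i) (agents ob)"
  have ex: "\<forall>i<?n. exec (cs!i) out (p@[i]) (st i) (JJ i) (st (Suc i))" using eSand.IH by blast
  have bnd: "\<forall>i<?n. st i \<le> st (Suc i) \<and> (\<forall>j\<in>JJ i. st i \<le> fst (snd j) \<and> snd (snd j) \<le> st (Suc i))"
  proof (intro allI impI)
    fix i assume "i < ?n"
    then show "st i \<le> st (Suc i) \<and> (\<forall>j\<in>JJ i. st i \<le> fst (snd j) \<and> snd (snd j) \<le> st (Suc i))"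
      using exec_bounds ex by blast
  qed
  have mono: "\<forall>i<?n. st i \<le> st (Suc i)" using bnd by blast
  have sep: "\<forall>i<?n. \<forall>j\<in>JJ i. st i \<le> fst (snd j) \<and> snd (snd j) \<le> st (Suc i)" using bnd by blast
  have s0: "st 0 \<le> st ?n" using chain_mono[OF mono, of 0 ?n] by simp
  show ?case
  proof (intro allI impI)
    fix M assume fr: "fresh (SandG g c cs) p M"
    have ih: "\<forall>i<?n. \<forall>M. fresh (cs!i) (p@[i]) M \<longrightarrow> (\<exists>M' ob. step\<^sup>*\<^sup>* (Conf r M) (Conf r M') \<and>
      (\<forall>x. \<not> pre (p@[i]) x \<longrightarrow> M' x = M x) \<and> M' (p@[i]) = Some ob \<and> ?Q i ob)"
      using eSand.IH unfolding reach_def by blast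
    obtain M1 where m1: "step\<^sup>*\<^sup>* (Conf r M) (Conf r M1)" "\<forall>x. (\<forall>i<?n. \<not> pre (p@[i]) x) \<longrightarrow> M1 x = M x"
      "\<forall>i<?n. \<exists>ob. M1 (p@[i]) = Some ob \<and> ?Q i ob"
      using children_loop[of ?n cs p r ?Q M] ih fresh_Sand[OF fr] by blast
    have f: "(\<forall>x. \<not> pre p x \<longrightarrow> M1 x = M x) \<and> M1 p = M p" using loop_frame[OF m1(2)] .
    have mp: "M1 p = Some (init_obj p (SandG g c cs))" using f fresh_root[OF fr] by simp
    have all: "\<forall>c\<in>set (map (\<lambda>i. p @ [i]) [0..<?n]). \<exists>oc. M1 c = Some oc \<and> status oc = Succeed"
      using m1(3) by auto
    obtain ob' where o: "step\<^sup>*\<^sup>* (Conf r M1) (Conf r (M1(p \<mapsto> ob')))" "kind ob' = KSand" "status ob' = Unknown" "pend ob' = []"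
      "acctime ob' = 0 + sum_list (map (\<lambda>c. acctime (the (M1 c))) (map (\<lambda>i. p @ [i]) [0..<?n]))"
      "\<forall>c\<in>set (map (\<lambda>i. p @ [i]) [0..<?n]). agents (the (M1 c)) \<le> agents ob'" "otime ob' = g"
      using sand_loop[where M=M1 and p=p and ob="init_obj p (SandG g c cs)" and ps="map (\<lambda>i. p @ [i]) [0..<?n]" and rest="[]" and r=r]
        mp pend_list all by auto
    have s2: "step (Conf r (M1(p \<mapsto> ob'))) (Conf r ((M1(p \<mapsto> ob'))(p \<mapsto> ob'\<lparr>status := Succeed,
        acctime := acctime ob' + otime ob', acccost := acccost ob' + ocost ob'\<rparr>)))"
      by (rule sand_succ) (use o in auto)
    show "reach r (\<lambda>ob. status ob = Succeed \<and> acctime ob = st ?n + g - s \<and>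
        fits (\<Union> (JJ ` {..<?n})) (agents ob)) p M"
    proof (rule reach_after2[OF m1(1) conjunct1[OF f] o(1) s2])
      have ai: "\<forall>i<?n. acctime (the (M1 (p@[i]))) = st (Suc i) - st i \<and> fits (JJ i) (agents (the (M1 (p@[i]))))"
        using m1(3) by force
      have "acctime ob' = (\<Sum>i<?n. acctime (the (M1 (p@[i]))))"
        using o(5) sum_list_map_upt[of "\<lambda>c. acctime (the (M1 c))" p ?n] by simp
      also have "\<dots> = (\<Sum>i<?n. st (Suc i) - st i)"
        by (rule sum.cong) (use ai in auto)
      also have "\<dots> = st ?n - st 0" using telescope[OF mono] .
      finally have at: "acctime ob' = st ?n - s" using eSand.hyps(1) by simp
      have "\<forall>i<?n. fits (JJ i) (agents ob')"
      proof (intro allI impI)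
        fix i assume i: "i < ?n"
        then have "agents (the (M1 (p@[i]))) \<le> agents ob'" using o(6) by auto
        then show "fits (JJ i) (agents ob')" using ai i fits_mono by blast
      qed
      then have fi: "fits (\<Union> (JJ ` {..<?n})) (agents ob')"
        using fits_UN_seq[of ?n JJ "agents ob'" st] sep mono by blast
      show "status (ob'\<lparr>status := Succeed, acctime := acctime ob' + otime ob', acccost := acccost ob' + ocost ob'\<rparr>) = Succeed \<and>
        acctime (ob'\<lparr>status := Succeed, acctime := acctime ob' + otime ob', acccost := acccost ob' + ocost ob'\<rparr>) = st ?n + g - s \<and>
        fits (\<Union> (JJ ` {..<?n})) (agents (ob'\<lparr>status := Succeed, acctime := acctime ob' + otime ob', acccost := acccost ob' + ocost ob'\<rparr>))"
        using o(7) at fi s0 eSand.hyps(1) by simp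
    qed
  qed
next
  case (eNot t out p g c s)
  show ?case
  proof (intro allI impI)
    fix M assume fr: "fresh (NotG g c t) p M"
    have ch: "reach r (\<lambda>ob. status ob = Fail) (p@[0]) M"
      using su_run eNot.hyps fresh_Not[OF fr] by blast
    obtain M1 oc where m1: "step\<^sup>*\<^sup>* (Conf r M) (Conf r M1)" "\<forall>x. \<not> pre (p@[0]) x \<longrightarrow> M1 x = M x"
     "M1 (p@[0]) = Some oc" "status oc = Fail" using ch unfolding reach_def by blast
    have f: "(\<forall>x. \<not> pre p x \<longrightarrow> M1 x = M x) \<and> M1 p = M p" using child_frame[OF m1(2)] .
    have mp: "M1 p = Some (init_obj p (NotG g c t))" using f fresh_root[OF fr] by simp
    have "step (Conf r M1) (Conf r (M1(p \<mapsto> (init_obj p (NotG g c t))\<lparr>status := Succeed,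
        acctime := otime (init_obj p (NotG g c t)), acccost := ocost (init_obj p (NotG g c t))\<rparr>)))"
      by (rule not_succ[where M=M1 and p=p and c="p@[0]", OF mp]) (use m1 in auto)
    then show "reach r (\<lambda>ob. status ob = Succeed \<and> acctime ob = s + g - s \<and> fits {} (agents ob)) p M"
      using m1(1) f fits_empty by (auto intro: reach_after)
  qed
qed

theorem theorem3:
  fixes T :: adt and n t :: nat
  assumes "can_perform T n t"
  shows "\<exists>a SA SD. encode T \<rightarrow>\<^sup>* Summary a t SA SD \<and> n \<le> a"
proof -
  from assms obtain out J where e: "exec T out [] 0 J t" "fits J n" "\<forall>m<n. \<not> fits J m"
    unfolding can_perform_def by blast
  let ?M = "\<lambda>p. map_option (init_obj p) (node_at T p)"
  have fr: "fresh T [] ?M" by (simp add: fresh_def)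
  have "reach [] (\<lambda>ob. status ob = Succeed \<and> acctime ob = t - 0 \<and> fits J (agents ob)) [] ?M"
    using exec_run[OF e(1)] fr by blast
  then obtain M' ob where o: "step\<^sup>*\<^sup>* (Conf [] ?M) (Conf [] M')" "M' [] = Some ob" "status ob = Succeed"
      "acctime ob = t" "fits J (agents ob)"
    unfolding reach_def by auto
  have "step (Conf [] M') (Summary (agents ob) (acctime ob) (used_attacks [] M') (active_defences M'))"
    using finish[of M' "[]" ob] o(2,3) by simp
  then have "encode T \<rightarrow>\<^sup>* Summary (agents ob) t (used_attacks [] M') (active_defences M')"
    unfolding encode_def using o(1,4) by (auto intro: rtranclp.rtrancl_into_rtrancl)
  moreover have "n \<le> agents ob" using e(3) o(5) not_le by blast
  ultimately show ?thesis by blast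
qed

end
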